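(* Let $(L,\le,\bot,\top)$ be a complete lattice and $(\&_i,\swarrow^i,\nwarrow_i)$, $i=1,\dots,n$, adjoint triples on $L$ with $x\,\&_i\,\top=\top\,\&_i\,x=x$ for all $x\in L$ and all $i$. Let $(A,B,R,\sigma)$ be a normalized context with concept lattice $\mathcal{M}$. If $\mathcal{M}$ has a decomposition into independent blocks $\{K_\mu\}_{\mu\in\Lambda}$, then the sets $\{A_\mu\mid\mu\in\Lambda\}$ form a partition of $A$ and the sets $\{B_\mu\mid\mu\in\Lambda\}$ form a partition of $B$, where, with $K_\mu^*=K_\mu\setminus\{\langle g_\top,f_\bot\rangle,\langle g_\bot,f_\top\rangle\}$, $$A_\mu=\{a\in A\mid\langle\phi_{a,x}^\downarrow,\phi_{a,x}^{\downarrow\uparrow}\rangle\in K_\mu^*\text{ for some }x\in L\},\quad B_\mu=\{b\in B\mid\langle\phi_{b,y}^{\uparrow\downarrow},\phi_{b,y}^{\uparrow}\rangle\in K_\mu^*\text{ for some }y\in L\}.$$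
   Context: An adjoint triple on $L$ is a triple of maps $\&,\swarrow,\nwarrow\colon L\times L\to L$ with $x\le z\swarrow y\iff x\& y\le z\iff y\le z\nwarrow x$. A context is $(A,B,R,\sigma)$ with $A,B$ non-empty, $R\colon A\times B\to L$, $\sigma\colon A\times B\to\{1,\dots,n\}$; normalized means every $a\in A$ has $b_1,b_2$ with $R(a,b_1)\ne\bot$, $R(a,b_2)=\bot$, and every $b\in B$ has $a_1,a_2$ with $R(a_1,b)\ne\bot$, $R(a_2,b)=\bot$. For $g\colon B\to L$, $f\colon A\to L$: $g^\uparrow(a)=\inf_{b}R(a,b)\swarrow^{\sigma(a,b)}g(b)$, $f^\downarrow(b)=\inf_{a}R(a,b)\nwarrow_{\sigma(a,b)}f(a)$. $\mathcal{M}$ is the complete lattice of pairs $\langle g,f\rangle$ with $g^\uparrow=f$, $f^\downarrow=g$, ordered by $g_1\le g_2$ pointwise; top $\langle g_\top,f_\bot\rangle$, bottom $\langle g_\bot,f_\top\rangle$ ($g_\top,g_\bot,f_\top,f_\bot$ constant maps). $\phi_{a,x}\colon A\to L$ takes value $x$ at $a$ and $\bot$ elsewhere; $\phi_{b,y}\colon B\to L$ takes value $y$ at $b$ and $\bot$ elsewhere. For a bounded lattice $(M,\preceq,\bot,\top)$, a block is a sublattice $K\subsetneq M$ with $K\setminus\{\bot,\top\}\ne\varnothing$ and $(\{x\mid k\preceq x\}\cup\{x\mid x\preceq k\})\setminus\{\bot,\top\}\subseteq K$ for all $k\in K\setminus\{\bot,\top\}$. Blocks $K_1,K_2$ are independent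 if $K_1\cap K_2\subseteq\{\bot,\top\}$. A decomposition into independent blocks is a family of pairwise independent blocks whose union is $M$. *)

theory Defs
  imports Main "HOL-Library.Disjoint_Sets"
begin

definition adjoint_triple :: "('l::order \<Rightarrow> 'l \<Rightarrow> 'l) \<Rightarrow> ('l \<Rightarrow> 'l \<Rightarrow> 'l) \<Rightarrow> ('l \<Rightarrow> 'l \<Rightarrow> 'l) \<Rightarrow> bool" where
  "adjoint_triple tn sw nw \<longleftrightarrow>
     (\<forall>x y z. (x \<le> sw z y \<longleftrightarrow> tn x y \<le> z) \<and> (tn x y \<le> z \<longleftrightarrow> y \<le> nw z x))"

text \<open>The object set A is the type 'a, the attribute set B is the type 'b (types are nonempty).\<close>
definition normalized_context :: "('a \<Rightarrow> 'b \<Rightarrow> 'l::complete_lattice) \<Rightarrow> bool" where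
  "normalized_context R \<longleftrightarrow>
     (\<forall>a. (\<exists>b1. R a b1 \<noteq> bot) \<and> (\<exists>b2. R a b2 = bot)) \<and>
     (\<forall>b. (\<exists>a1. R a1 b \<noteq> bot) \<and> (\<exists>a2. R a2 b = bot))"

definition up_op :: "(nat \<Rightarrow> 'l::complete_lattice \<Rightarrow> 'l \<Rightarrow> 'l) \<Rightarrow> ('a \<Rightarrow> 'b \<Rightarrow> 'l) \<Rightarrow> ('a \<Rightarrow> 'b \<Rightarrow> nat)
     \<Rightarrow> ('b \<Rightarrow> 'l) \<Rightarrow> ('a \<Rightarrow> 'l)" where
  "up_op sw R \<sigma> g = (\<lambda>a. INF b. sw (\<sigma> a b) (R a b) (g b))"

definition down_op :: "(nat \<Rightarrow> 'l::complete_lattice \<Rightarrow> 'l \<Rightarrow> 'l) \<Rightarrow> ('a \<Rightarrow> 'b \<Rightarrow> 'l) \<Rightarrow> ('a \<Rightarrow> 'b \<Rightarrow> nat)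
     \<Rightarrow> ('a \<Rightarrow> 'l) \<Rightarrow> ('b \<Rightarrow> 'l)" where
  "down_op nw R \<sigma> f = (\<lambda>b. INF a. nw (\<sigma> a b) (R a b) (f a))"

definition concepts where
  "concepts sw nw R \<sigma> = {(g, f). up_op sw R \<sigma> g = f \<and> down_op nw R \<sigma> f = g}"

definition concept_le :: "('b \<Rightarrow> 'l::order) \<times> ('a \<Rightarrow> 'l) \<Rightarrow> ('b \<Rightarrow> 'l) \<times> ('a \<Rightarrow> 'l) \<Rightarrow> bool" where
  "concept_le c d \<longleftrightarrow> fst c \<le> fst d"

definition concept_top :: "('b \<Rightarrow> 'l::complete_lattice) \<times> ('a \<Rightarrow> 'l)" where
  "concept_top = ((\<lambda>_. top), (\<lambda>_. bot))"

definition concept_bot :: "('b \<Rightarrow> 'l::complete_lattice) \<times> ('a \<Rightarrow> 'l)" where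
  "concept_bot = ((\<lambda>_. bot), (\<lambda>_. top))"

definition is_join_in :: "'c set \<Rightarrow> ('c \<Rightarrow> 'c \<Rightarrow> bool) \<Rightarrow> 'c \<Rightarrow> 'c \<Rightarrow> 'c \<Rightarrow> bool" where
  "is_join_in M le x y z \<longleftrightarrow> z \<in> M \<and> le x z \<and> le y z \<and> (\<forall>w\<in>M. le x w \<and> le y w \<longrightarrow> le z w)"

definition is_meet_in :: "'c set \<Rightarrow> ('c \<Rightarrow> 'c \<Rightarrow> bool) \<Rightarrow> 'c \<Rightarrow> 'c \<Rightarrow> 'c \<Rightarrow> bool" where
  "is_meet_in M le x y z \<longleftrightarrow> z \<in> M \<and> le z x \<and> le z y \<and> (\<forall>w\<in>M. le w x \<and> le w y \<longrightarrow> le w z)"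

definition sublattice_of :: "'c set \<Rightarrow> 'c set \<Rightarrow> ('c \<Rightarrow> 'c \<Rightarrow> bool) \<Rightarrow> bool" where
  "sublattice_of K M le \<longleftrightarrow> K \<subseteq> M \<and>
     (\<forall>x\<in>K. \<forall>y\<in>K. \<exists>z\<in>K. is_join_in M le x y z) \<and>
     (\<forall>x\<in>K. \<forall>y\<in>K. \<exists>z\<in>K. is_meet_in M le x y z)"

definition is_block :: "'c set \<Rightarrow> ('c \<Rightarrow> 'c \<Rightarrow> bool) \<Rightarrow> 'c \<Rightarrow> 'c \<Rightarrow> 'c set \<Rightarrow> bool" where
  "is_block M le bt tp K \<longleftrightarrow>
     sublattice_of K M le \<and> K \<noteq> M \<and> K - {bt, tp} \<noteq> {} \<and>
     (\<forall>k\<in>K - {bt, tp}. ({x\<in>M. le k x} \<union> {x\<in>M. le x k}) - {bt, tp} \<subseteq> K)"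

definition independent_blocks :: "'c \<Rightarrow> 'c \<Rightarrow> 'c set \<Rightarrow> 'c set \<Rightarrow> bool" where
  "independent_blocks bt tp K1 K2 \<longleftrightarrow> K1 \<inter> K2 \<subseteq> {bt, tp}"

definition decomposition_independent_blocks ::
    "'c set \<Rightarrow> ('c \<Rightarrow> 'c \<Rightarrow> bool) \<Rightarrow> 'c \<Rightarrow> 'c \<Rightarrow> 'i set \<Rightarrow> ('i \<Rightarrow> 'c set) \<Rightarrow> bool" where
  "decomposition_independent_blocks M le bt tp \<Lambda> K \<longleftrightarrow>
     (\<forall>\<mu>\<in>\<Lambda>. is_block M le bt tp (K \<mu>)) \<and>
     (\<forall>\<mu>\<in>\<Lambda>. \<forall>\<nu>\<in>\<Lambda>. \<mu> \<noteq> \<nu> \<longrightarrow> independent_blocks bt tp (K \<mu>) (K \<nu>)) \<and>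
     (\<Union>\<mu>\<in>\<Lambda>. K \<mu>) = M"

definition phi :: "'x \<Rightarrow> 'l::complete_lattice \<Rightarrow> 'x \<Rightarrow> 'l" where
  "phi a x = (\<lambda>a'. if a' = a then x else bot)"

definition obj_block where
  "obj_block sw nw R \<sigma> Kmu =
     {a. \<exists>x. (down_op nw R \<sigma> (phi a x), up_op sw R \<sigma> (down_op nw R \<sigma> (phi a x)))
              \<in> Kmu - {concept_top, concept_bot}}"

definition attr_block where
  "attr_block sw nw R \<sigma> Kmu =
     {b. \<exists>y. (down_op nw R \<sigma> (up_op sw R \<sigma> (phi b y)), up_op sw R \<sigma> (phi b y))
              \<in> Kmu - {concept_top, concept_bot}}"

end

theory Submission
  imports Defs
begin

locale ctx33 =
  fixes n :: nat
    and tn sw nw :: "nat \<Rightarrow> 'l::complete_lattice \<Rightarrow> 'l \<Rightarrow> 'l"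
    and R :: "'a \<Rightarrow> 'b \<Rightarrow> 'l"
    and \<sigma> :: "'a \<Rightarrow> 'b \<Rightarrow> nat"
  assumes adj: "\<forall>i\<in>{1..n}. adjoint_triple (tn i) (sw i) (nw i)"
    and bnd: "\<forall>i\<in>{1..n}. \<forall>x. tn i x top = x \<and> tn i top x = x"
    and sig: "\<forall>a b. \<sigma> a b \<in> {1..n}"
begin

abbreviation up where "up \<equiv> up_op sw R \<sigma>"
abbreviation dn where "dn \<equiv> down_op nw R \<sigma>"

lemma adjp: "(x \<le> sw (\<sigma> a b) z y \<longleftrightarrow> tn (\<sigma> a b) x y \<le> z) \<and> (tn (\<sigma> a b) x y \<le> z \<longleftrightarrow> y \<le> nw (\<sigma> a b) z x)"
  using adj sig unfolding adjoint_triple_def by blast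

lemma bndp: "tn (\<sigma> a b) x top = x \<and> tn (\<sigma> a b) top x = x"
  using bnd sig by blast

lemma GC: "g \<le> dn f \<longleftrightarrow> f \<le> up g"
proof -
  have "g \<le> dn f \<longleftrightarrow> (\<forall>a b. g b \<le> nw (\<sigma> a b) (R a b) (f a))"
    by (auto simp: down_op_def le_fun_def le_INF_iff)
  also have "\<dots> \<longleftrightarrow> (\<forall>a b. f a \<le> sw (\<sigma> a b) (R a b) (g b))"
    using adjp by blast
  also have "\<dots> \<longleftrightarrow> f \<le> up g"
    by (auto simp: up_op_def le_fun_def le_INF_iff)
  finally show ?thesis .
qed

lemma ext_up: "g \<le> dn (up g)" using GC by blast
lemma ext_dn: "f \<le> up (dn f)" using GC by blast
lemma anti_up: "g1 \<le> g2 \<Longrightarrow> up g2 \<le> up g1"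
  using GC ext_up order_trans by metis
lemma anti_dn: "f1 \<le> f2 \<Longrightarrow> dn f2 \<le> dn f1"
  using GC ext_dn order_trans by metis
lemma dud: "dn (up (dn f)) = dn f"
  by (meson anti_dn antisym ext_dn ext_up)
lemma udu: "up (dn (up g)) = up g"
  by (meson anti_up antisym ext_dn ext_up)

lemma conc1: "(dn f, up (dn f)) \<in> concepts sw nw R \<sigma>"
  by (simp add: concepts_def dud)
lemma conc2: "(dn (up g), up g) \<in> concepts sw nw R \<sigma>"
  by (simp add: concepts_def udu)

lemma dn_bot: "dn (\<lambda>_. bot) = (\<lambda>_. top)"
proof -
  have "(\<lambda>_. top) \<le> dn (\<lambda>_. bot)" using GC by (simp add: le_fun_def)
  thus ?thesis by (simp add: antisym le_fun_def)
qed
lemma up_bot: "up (\<lambda>_. bot) = (\<lambda>_. top)"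
proof -
  have "(\<lambda>_. top) \<le> up (\<lambda>_. bot)" using GC[of "\<lambda>_. bot" "\<lambda>_. top"] by (simp add: le_fun_def)
  thus ?thesis by (simp add: antisym le_fun_def)
qed

lemma is_top: "c \<in> concepts sw nw R \<sigma> \<Longrightarrow> c = concept_top \<longleftrightarrow> snd c = (\<lambda>_. bot)"
  by (cases c) (auto simp: concepts_def concept_top_def dn_bot)
lemma is_bot: "c \<in> concepts sw nw R \<sigma> \<Longrightarrow> c = concept_bot \<longleftrightarrow> fst c = (\<lambda>_. bot)"
  by (cases c) (auto simp: concepts_def concept_bot_def up_bot)

lemma nw_bot: "nw (\<sigma> a b) z bot = top"
proof -
  have "tn (\<sigma> a b) bot y \<le> z" for y
    using adjp[of bot a b z y] by simp
  hence "top \<le> nw (\<sigma> a b) z bot" using adjp by blast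
  thus ?thesis by (simp add: top_le)
qed
lemma sw_bot: "sw (\<sigma> a b) z bot = top"
proof -
  have "tn (\<sigma> a b) y bot \<le> z" for y
    using adjp[of y a b z bot] by (metis bot_least)
  hence "top \<le> sw (\<sigma> a b) z bot" using adjp by blast
  thus ?thesis by (simp add: top_le)
qed

lemma dn_phi_top: "R a b \<le> dn (phi a top) b"
  unfolding down_op_def
proof (rule INF_greatest)
  fix a' show "R a b \<le> nw (\<sigma> a' b) (R a' b) (phi a top a')"
  proof (cases "a' = a")
    case True
    then show ?thesis using adjp[of top a b "R a b" "R a b"] bndp[of a b] by (simp add: phi_def)
  qed (simp add: phi_def nw_bot)
qed

lemma up_phi_top: "R a b \<le> up (phi b top) a"
  unfolding up_op_def
proof (rule INF_greatest)
  fix b' show "R a b \<le> sw (\<sigma> a b') (R a b') (phi b top b')"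
  proof (cases "b' = b")
    case True
    then show ?thesis using adjp[of "R a b" a b "R a b" top] bndp[of a b] by (simp add: phi_def)
  qed (simp add: phi_def sw_bot)
qed

lemma phi_mono: "phi a x \<le> phi a (top::'l)"
  by (simp add: phi_def le_fun_def)

end

lemma part_gen:
  fixes P :: "'i \<Rightarrow> 'x set" and Q :: "'x \<Rightarrow> 'c"
  assumes Q: "\<And>x. Q x \<in> M" "\<And>x. Q x \<notin> {bt, tp}"
    and key: "\<And>\<mu> x. \<mu> \<in> \<Lambda> \<Longrightarrow> x \<in> P \<mu> \<longleftrightarrow> Q x \<in> K \<mu>"
    and ne: "\<And>\<mu>. \<mu> \<in> \<Lambda> \<Longrightarrow> P \<mu> \<noteq> {}"
    and ind: "\<forall>\<mu>\<in>\<Lambda>. \<forall>\<nu>\<in>\<Lambda>. \<mu> \<noteq> \<nu> \<longrightarrow> independent_blocks bt tp (K \<mu>) (K \<nu>)"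
    and cov: "(\<Union>\<mu>\<in>\<Lambda>. K \<mu>) = M"
  shows "partition_on UNIV (P ` \<Lambda>)"
  unfolding partition_on_def
proof (intro conjI)
  show "\<Union> (P ` \<Lambda>) = UNIV"
  proof (rule set_eqI, simp)
    fix x
    from Q(1)[of x] cov obtain \<mu> where "\<mu> \<in> \<Lambda>" "Q x \<in> K \<mu>" by blast
    thus "\<exists>\<mu>\<in>\<Lambda>. x \<in> P \<mu>" using key by blast
  qed
  show "disjoint (P ` \<Lambda>)"
    unfolding disjoint_def
  proof (clarify)
    fix \<mu> \<nu> assume h: "\<mu> \<in> \<Lambda>" "\<nu> \<in> \<Lambda>" "P \<mu> \<noteq> P \<nu>"
    hence "\<mu> \<noteq> \<nu>" by blast
    show "P \<mu> \<inter> P \<nu> = {}"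
    proof (rule ccontr)
      assume "P \<mu> \<inter> P \<nu> \<noteq> {}"
      then obtain x where "x \<in> P \<mu>" "x \<in> P \<nu>" by blast
      hence "Q x \<in> K \<mu> \<inter> K \<nu>" using key h by blast
      thus False using ind h \<open>\<mu> \<noteq> \<nu>\<close> Q(2)[of x] unfolding independent_blocks_def by blast
    qed
  qed
  show "{} \<notin> P ` \<Lambda>" using ne by force
qed

theorem proposition33:
  fixes n :: nat
    and tn sw nw :: "nat \<Rightarrow> 'l::complete_lattice \<Rightarrow> 'l \<Rightarrow> 'l"
    and R :: "'a \<Rightarrow> 'b \<Rightarrow> 'l"
    and \<sigma> :: "'a \<Rightarrow> 'b \<Rightarrow> nat"
    and \<Lambda> :: "'i set"
    and K :: "'i \<Rightarrow> (('b \<Rightarrow> 'l) \<times> ('a \<Rightarrow> 'l)) set"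
  assumes adj: "\<forall>i\<in>{1..n}. adjoint_triple (tn i) (sw i) (nw i)"
    and bnd: "\<forall>i\<in>{1..n}. \<forall>x. tn i x top = x \<and> tn i top x = x"
    and sig: "\<forall>a b. \<sigma> a b \<in> {1..n}"
    and norm: "normalized_context R"
    and dec: "decomposition_independent_blocks (concepts sw nw R \<sigma>) concept_le
                 concept_bot concept_top \<Lambda> K"
  shows "partition_on (UNIV :: 'a set) ((\<lambda>\<mu>. obj_block sw nw R \<sigma> (K \<mu>)) ` \<Lambda>)
       \<and> partition_on (UNIV :: 'b set) ((\<lambda>\<mu>. attr_block sw nw R \<sigma> (K \<mu>)) ` \<Lambda>)"
proof -
  interpret ctx33 n tn sw nw R \<sigma> using adj bnd sig by unfold_locales
  define M where "M = concepts sw nw R \<sigma>"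
  have blk: "\<forall>\<mu>\<in>\<Lambda>. is_block M concept_le concept_bot concept_top (K \<mu>)"
    and ind: "\<forall>\<mu>\<in>\<Lambda>. \<forall>\<nu>\<in>\<Lambda>. \<mu> \<noteq> \<nu> \<longrightarrow> independent_blocks concept_bot concept_top (K \<mu>) (K \<nu>)"
    and cov: "(\<Union>\<mu>\<in>\<Lambda>. K \<mu>) = M"
    using dec unfolding decomposition_independent_blocks_def M_def by auto
  have bp: "c \<in> K \<mu>" if "\<mu> \<in> \<Lambda>" "k \<in> K \<mu>" "k \<notin> {concept_bot, concept_top}" "c \<in> M"
     "concept_le k c \<or> concept_le c k" "c \<notin> {concept_bot, concept_top}" for \<mu> k c
    using blk that unfolding is_block_def by blast
  have exk: "\<exists>k. k \<in> K \<mu> \<and> k \<in> M \<and> k \<notin> {concept_bot, concept_top}" if "\<mu> \<in> \<Lambda>" for \<mu>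
    using blk that cov unfolding is_block_def by blast
  have n1: "\<forall>a. \<exists>b. R a b \<noteq> bot" and n2: "\<forall>b. \<exists>a. R a b \<noteq> bot"
    using norm unfolding normalized_context_def by auto
  have tb: "(bot::'l) \<noteq> top"
    using n1 by (metis top_le bot_least)
  define Ob where "Ob a x = (dn (phi a x), up (dn (phi a x)))" for a x
  have Ob_M: "Ob a x \<in> M" for a x by (simp add: Ob_def M_def conc1)
  have O_nb: "Ob a top \<noteq> concept_bot" for a
  proof
    assume "Ob a top = concept_bot"
    hence e: "dn (phi a top) = (\<lambda>_. bot)" by (metis Ob_def concept_bot_def fst_conv)
    obtain b where "R a b \<noteq> bot" using n1 by blast
    thus False using dn_phi_top[of a b] e by (simp add: bot_unique)
  qed
  have O_nt: "Ob a x \<noteq> concept_top" if "x \<noteq> bot" for a x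
  proof
    assume "Ob a x = concept_top"
    hence e: "up (dn (phi a x)) = (\<lambda>_. bot)" by (metis Ob_def concept_top_def snd_conv)
    have "phi a x a \<le> up (dn (phi a x)) a" using ext_dn by (simp add: le_fun_def)
    thus False using e that by (simp add: phi_def bot_unique)
  qed
  have O_le: "concept_le (Ob a top) (Ob a x)" for a x
    by (simp add: Ob_def concept_le_def anti_dn phi_mono)
  have keyO: "a \<in> obj_block sw nw R \<sigma> (K \<mu>) \<longleftrightarrow> Ob a top \<in> K \<mu>" if "\<mu> \<in> \<Lambda>" for a \<mu>
  proof
    assume "a \<in> obj_block sw nw R \<sigma> (K \<mu>)"
    then obtain x where x: "Ob a x \<in> K \<mu>" "Ob a x \<notin> {concept_bot, concept_top}"
      unfolding obj_block_def Ob_def by blast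
    show "Ob a top \<in> K \<mu>"
      by (rule bp[OF that x(1) x(2) Ob_M]) (use O_le O_nb O_nt tb in auto)
  next
    assume "Ob a top \<in> K \<mu>"
    thus "a \<in> obj_block sw nw R \<sigma> (K \<mu>)"
      unfolding obj_block_def using O_nb O_nt[OF tb[symmetric]] unfolding Ob_def by blast
  qed
  have neO: "obj_block sw nw R \<sigma> (K \<mu>) \<noteq> {}" if mu: "\<mu> \<in> \<Lambda>" for \<mu>
  proof -
    obtain g f where k: "(g, f) \<in> K \<mu>" "(g, f) \<in> M" "(g, f) \<notin> {concept_bot, concept_top}"
      using exk[OF mu] by auto
    have fg: "up g = f" "dn f = g" using k(2) by (auto simp: M_def concepts_def)
    have "f \<noteq> (\<lambda>_. bot)" "g \<noteq> (\<lambda>_. bot)" using k(2,3) is_top is_bot M_def by auto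
    then obtain a where fa: "f a \<noteq> bot" by auto
    have le: "concept_le (g, f) (Ob a (f a))"
    proof -
      have "phi a (f a) \<le> f" by (simp add: phi_def le_fun_def)
      hence "g \<le> dn (phi a (f a))" using GC fg by simp
      thus ?thesis by (simp add: concept_le_def Ob_def)
    qed
    have nbk: "Ob a (f a) \<noteq> concept_bot"
    proof
      assume "Ob a (f a) = concept_bot"
      hence "fst (Ob a (f a)) = (\<lambda>_. bot)" by (simp add: concept_bot_def)
      thus False using le \<open>g \<noteq> (\<lambda>_. bot)\<close> by (simp add: concept_le_def bot_unique le_fun_def fun_eq_iff)
    qed
    hence "Ob a (f a) \<in> K \<mu>" using bp[OF mu k(1) k(3) Ob_M] le O_nt[OF fa] by blast
    hence "a \<in> obj_block sw nw R \<sigma> (K \<mu>)" using nbk O_nt[OF fa] unfolding obj_block_def Ob_def by blast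
    thus ?thesis by blast
  qed
  have P1: "partition_on (UNIV :: 'a set) ((\<lambda>\<mu>. obj_block sw nw R \<sigma> (K \<mu>)) ` \<Lambda>)"
    by (rule part_gen[where Q="\<lambda>a. Ob a top" and M=M and K=K and bt=concept_bot and tp=concept_top])
       (use Ob_M O_nb O_nt[OF tb[symmetric]] keyO neO ind cov in auto)
  define D where "D b y = (dn (up (phi b y)), up (phi b y))" for b y
  have D_M: "D b y \<in> M" for b y by (simp add: D_def M_def conc2)
  have D_nt: "D b top \<noteq> concept_top" for b
  proof
    assume "D b top = concept_top"
    hence e: "up (phi b top) = (\<lambda>_. bot)" by (metis D_def concept_top_def snd_conv)
    obtain a where "R a b \<noteq> bot" using n2 by blast
    thus False using up_phi_top[of a b] e by (simp add: bot_unique)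
  qed
  have D_nb: "D b y \<noteq> concept_bot" if "y \<noteq> bot" for b y
  proof
    assume "D b y = concept_bot"
    hence e: "dn (up (phi b y)) = (\<lambda>_. bot)" by (metis D_def concept_bot_def fst_conv)
    have "phi b y b \<le> dn (up (phi b y)) b" using ext_up by (simp add: le_fun_def)
    thus False using e that by (simp add: phi_def bot_unique)
  qed
  have D_le: "concept_le (D b y) (D b top)" for b y
    by (simp add: D_def concept_le_def anti_dn anti_up phi_mono)
  have keyD: "b \<in> attr_block sw nw R \<sigma> (K \<mu>) \<longleftrightarrow> D b top \<in> K \<mu>" if "\<mu> \<in> \<Lambda>" for b \<mu>
  proof
    assume "b \<in> attr_block sw nw R \<sigma> (K \<mu>)"
    then obtain y where y: "D b y \<in> K \<mu>" "D b y \<notin> {concept_bot, concept_top}"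
      unfolding attr_block_def D_def by blast
    show "D b top \<in> K \<mu>"
      by (rule bp[OF that y(1) y(2) D_M]) (use D_le D_nb D_nt tb in auto)
  next
    assume "D b top \<in> K \<mu>"
    thus "b \<in> attr_block sw nw R \<sigma> (K \<mu>)"
      unfolding attr_block_def using D_nt D_nb[OF tb[symmetric]] unfolding D_def by blast
  qed
  have neD: "attr_block sw nw R \<sigma> (K \<mu>) \<noteq> {}" if mu: "\<mu> \<in> \<Lambda>" for \<mu>
  proof -
    obtain g f where k: "(g, f) \<in> K \<mu>" "(g, f) \<in> M" "(g, f) \<notin> {concept_bot, concept_top}"
      using exk[OF mu] by auto
    have fg: "up g = f" "dn f = g" using k(2) by (auto simp: M_def concepts_def)
    have "f \<noteq> (\<lambda>_. bot)" "g \<noteq> (\<lambda>_. bot)" using k(2,3) is_top is_bot M_def by auto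
    then obtain b where gb: "g b \<noteq> bot" by auto
    have pg: "phi b (g b) \<le> g" by (simp add: phi_def le_fun_def)
    hence ug: "f \<le> up (phi b (g b))" using anti_up fg by metis
    have le: "concept_le (D b (g b)) (g, f)"
      using anti_dn[OF ug] fg by (simp add: concept_le_def D_def)
    have ntk: "D b (g b) \<noteq> concept_top"
    proof
      assume "D b (g b) = concept_top"
      hence "snd (D b (g b)) = (\<lambda>_. bot)" by (simp add: concept_top_def)
      thus False using ug \<open>f \<noteq> (\<lambda>_. bot)\<close> by (simp add: D_def bot_unique le_fun_def fun_eq_iff)
    qed
    hence "D b (g b) \<in> K \<mu>" using bp[OF mu k(1) k(3) D_M] le D_nb[OF gb] by blast
    hence "b \<in> attr_block sw nw R \<sigma> (K \<mu>)" using ntk D_nb[OF gb] unfolding attr_block_def D_def by blast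
    thus ?thesis by blast
  qed
  have P2: "partition_on (UNIV :: 'b set) ((\<lambda>\<mu>. attr_block sw nw R \<sigma> (K \<mu>)) ` \<Lambda>)"
    by (rule part_gen[where Q="\<lambda>b. D b top" and M=M and K=K and bt=concept_bot and tp=concept_top])
       (use D_M D_nt D_nb[OF tb[symmetric]] keyD neD ind cov in auto)
  show ?thesis using P1 P2 by blast
qed

end
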